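(* For real $m,n\ge 2$, let $p_c(m,n)$ denote the unique fixed point in $(0,1)$ of $f_{m,n}(p)=1-(1-p^n)^m$. Then for $m,n\ge 2$, $\frac{\partial p_c}{\partial m}<0$ and $\frac{\partial p_c}{\partial n}>0$.
   Context: The paper asserts that for $m,n\ge 2$ the function $f_{m,n}(p)=1-(1-p^n)^m$ has exactly one fixed point in $(0,1)$. This fixed point is repelling, while $0$ and $1$ are attracting fixed points. For integers $m,n$, this fixed point is the critical bond-percolation probability of the diamond fractal $D(m,n)$. $D(m,n)$ is obtained by starting from a single edge and repeatedly replacing every edge by $m$ parallel disjoint paths of $n$ edges each. *)

theory Defs
  imports Complex_Main
begin

definition fmn :: "real \<Rightarrow> real \<Rightarrow> real \<Rightarrow> real" where
  "fmn m n p = 1 - (1 - p powr n) powr m"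

definition pc :: "real \<Rightarrow> real \<Rightarrow> real" where
  "pc m n = (THE p. 0 < p \<and> p < 1 \<and> fmn m n p = p)"

end

theory Submission imports Defs "HOL-Real_Asymp.Real_Asymp" begin

lemma neg_ln_1m_lt: fixes x :: real assumes "0<x" "x<1"
  shows "(1-x) * (- ln (1-x)) < x"
proof -
  have "ln (1 + x/(1-x)) < x/(1-x)" using assms by (intro ln_add_one_self_less_self) auto
  moreover have "1 + x/(1-x) = inverse (1-x)" using assms by (simp add: field_simps)
  ultimately have "- ln (1-x) < x/(1-x)" using assms by (simp add: ln_inverse)
  then show ?thesis using assms by (simp add: field_simps)
qed

lemma aux_ineq: fixes x :: real assumes "0<x" "x<1"
  shows "x * ln x + (1-x) * ln (1-x) + ln x * ln (1-x) < 0"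
proof -
  define a where "a = - ln x"
  define b where "b = - ln (1-x)"
  have a0: "a > 0" "b > 0" using assms by (auto simp: a_def b_def)
  have 1: "(1-x) * b < x" using neg_ln_1m_lt[OF assms] by (simp add: b_def)
  have 2: "x * a < 1 - x" using neg_ln_1m_lt[of "1-x"] assms by (simp add: a_def)
  have "a * b < x * a + (1-x) * b"
  proof -
    have "(1-x)*b*a < x*a" using 1 a0 by (intro mult_strict_right_mono) auto
    moreover have "x*a*b < (1-x)*b" using 2 a0 by (intro mult_strict_right_mono) auto
    ultimately show ?thesis by (simp add: algebra_simps)
  qed
  then show ?thesis by (simp add: a_def b_def algebra_simps)
qed

definition W :: "real \<Rightarrow> real" where "W x = ((1-x) * ln (1-x)) / (x * ln x)"

lemma W_deriv: fixes x :: real assumes "0<x" "x<1"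
  shows "\<exists>D. (W has_real_derivative D) (at x) \<and> D > 0"
proof -
  let ?N = "(1-x) * ln (1-x)" and ?Dn = "x * ln x"
  have dpos: "?Dn \<noteq> 0" using assms by (simp add: ln_less_zero)
  have "(W has_real_derivative
     ((- ln (1-x) - 1) * ?Dn - ?N * (ln x + 1)) / (?Dn * ?Dn)) (at x)"
    unfolding W_def[abs_def] using assms dpos
    by (auto intro!: derivative_eq_intros simp: field_simps)
  moreover have "((- ln (1-x) - 1) * ?Dn - ?N * (ln x + 1)) / (?Dn * ?Dn) > 0"
  proof (rule divide_pos_pos)
    show "0 < (- ln (1-x) - 1) * ?Dn - ?N * (ln x + 1)"
      using aux_ineq[OF assms] by (simp add: algebra_simps)
    show "0 < ?Dn * ?Dn" using dpos not_real_square_gt_zero by blast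
  qed
  ultimately show ?thesis by blast
qed

lemma W_mono: fixes x y :: real assumes "0<x" "x<y" "y<1" shows "W x < W y"
  by (rule DERIV_pos_imp_increasing[OF assms(2)]) (use W_deriv assms in auto)


lemma div_less_neg: fixes X Y Z V :: real
  assumes "X/Y < Z/V" "Y<0" "V<0" shows "X*V < Z*Y"
proof -
  have "X/Y*(Y*V) < Z/V*(Y*V)" using assms by (intro mult_strict_right_mono) (auto simp: mult_neg_neg)
  moreover have "X/Y*(Y*V) = X*V" "Z/V*(Y*V) = Z*Y" using assms by auto
  ultimately show ?thesis by simp
qed

lemma key: fixes p n m :: real assumes p: "0<p" "p<1" and n: "n>1"
  and eq: "m * ln (1 - p powr n) = ln (1-p)"
  shows "1 - p powr n < m * n * p powr (n-1) * (1-p)"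
proof -
  define a where "a = p powr n"
  have a0: "0 < a" using p by (simp add: a_def)
  have ap: "a < p" using powr_less_mono'[OF p n] p by (simp add: a_def)
  have W: "W a < W p" using W_mono[OF a0 ap p(2)] .
  define L where "L = ln (1-a)"
  define P where "P = ln p"
  have L0: "L < 0" using a0 ap p by (simp add: L_def)
  have P0: "P < 0" using p by (simp add: P_def)
  have la: "ln a = n * P" using p by (simp add: a_def P_def ln_powr)
  have lna0: "ln a < 0" using a0 ap p by simp
  have l1p0: "ln (1-p) < 0" using p by simp
  have Wc: "(1-a)*L * (p*P) < (1-p)*ln(1-p) * (a * ln a)"
  proof -
    have y: "a * ln a < 0" using a0 lna0 by (simp add: mult_pos_neg)
    have v: "p * P < 0" using p P0 by (simp add: mult_pos_neg)
    have "(1-a)*L/(a*ln a) < (1-p)*ln(1-p)/(p*P)" using W by (simp add: W_def L_def P_def)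
    from div_less_neg[OF this y v] show ?thesis by (simp add: algebra_simps)
  qed
  have pw: "p powr (n-1) = a / p" using p by (simp add: a_def powr_diff)
  have pos: "L * P * p > 0" using L0 P0 p by (simp add: mult_neg_neg)
  have "m * n * p powr (n-1) * (1-p) * (L*P*p) = (m*L) * (n*P) * a * (1-p)"
    using p by (simp add: pw field_simps)
  also have "\<dots> = ln(1-p) * ln a * a * (1-p)" using eq la by (simp add: L_def a_def P_def)
  finally have R: "m * n * p powr (n-1) * (1-p) * (L*P*p) = ln(1-p) * ln a * a * (1-p)" .
  have "(1-a) * (L*P*p) < m * n * p powr (n-1) * (1-p) * (L*P*p)"
    unfolding R using Wc by (simp add: algebra_simps)
  then show ?thesis using pos unfolding a_def by (rule mult_less_cancel_right_pos[THEN iffD1, rotated])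
qed

definition h :: "real \<Rightarrow> real \<Rightarrow> real" where
  "h n p = ln (1-p) / ln (1 - p powr n)"

lemma fmn_iff_h: fixes p n m :: real assumes p: "0<p" "p<1" and n: "n>0"
  shows "fmn m n p = p \<longleftrightarrow> h n p = m"
proof -
  have a1: "p powr n < 1" using powr_less_mono'[of p 0 n] p n by simp
  have a0: "0 < p powr n" using p by simp
  have B: "ln (1 - p powr n) < 0" using a1 a0 by simp
  have "fmn m n p = p \<longleftrightarrow> (1 - p powr n) powr m = 1 - p" by (auto simp: fmn_def)
  also have "\<dots> \<longleftrightarrow> ln ((1 - p powr n) powr m) = ln (1-p)"
    using a1 p by (subst ln_inj_iff) auto
  also have "\<dots> \<longleftrightarrow> m * ln (1 - p powr n) = ln (1-p)" using a1 by (simp add: ln_powr)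
  also have "\<dots> \<longleftrightarrow> h n p = m" using B by (auto simp: h_def field_simps)
  finally show ?thesis .
qed

lemma h_deriv: fixes p n :: real assumes p: "0<p" "p<1" and n: "n>1"
  shows "\<exists>D. (h n has_real_derivative D) (at p) \<and> D < 0"
proof -
  define a where "a = p powr n"
  have a0: "0 < a" using p by (simp add: a_def)
  have a1: "a < 1" using powr_less_mono'[of p 0 n] p n by (simp add: a_def)
  define A where "A = ln (1-p)"
  define B where "B = ln (1-a)"
  have B0: "B < 0" using a0 a1 by (simp add: B_def)
  define A' where "A' = - 1 / (1-p)"
  define B' where "B' = - (n * p powr (n-1)) / (1-a)"
  have "(h n has_real_derivative (A' * B - A * B') / (B*B)) (at p)"
    unfolding h_def[abs_def] using p a0 a1 B0
    by (auto intro!: derivative_eq_intros simp: A'_def B'_def A_def B_def a_def field_simps)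
  moreover have "(A' * B - A * B') / (B*B) < 0"
  proof -
    define m where "m = A / B"
    have eq: "m * ln (1 - p powr n) = ln (1-p)" using B0 by (simp add: m_def A_def B_def a_def)
    have k: "1 - a < m * n * p powr (n-1) * (1-p)" using key[OF p n eq] by (simp add: a_def)
    have "A' - m * B' > 0"
    proof -
      have "1/(1-p) < m * n * p powr (n-1) / (1-a)" using k p a1 by (simp add: field_simps)
      then show ?thesis by (simp add: A'_def B'_def field_simps)
    qed
    moreover have "A' * B - A * B' = B * (A' - m * B')" using B0 by (simp add: m_def field_simps)
    ultimately have "A' * B - A * B' < 0" using B0 by (simp add: mult_neg_pos)
    then show ?thesis using B0 by (simp add: divide_neg_pos mult_neg_neg)
  qed
  ultimately show ?thesis by blast
qed


lemma h_strict: fixes p q n :: real assumes "0<p" "p<q" "q<1" "n>1"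
  shows "h n q < h n p"
  by (rule DERIV_neg_imp_decreasing[OF assms(2)]) (use h_deriv assms in auto)

lemma h_inj: fixes p q n :: real assumes "0<p" "p<1" "0<q" "q<1" "n>1" "h n p = h n q"
  shows "p = q"
  using h_strict[of p q n] h_strict[of q p n] assms by (cases p q rule: linorder_cases) auto

lemma h_cont: fixes p n :: real assumes "0<p" "p<1" "n>1" shows "isCont (h n) p"
  using h_deriv[OF assms] DERIV_isCont by blast

lemma h_exists: fixes m n :: real assumes n: "n>1" and m: "m>1"
  shows "\<exists>p. 0<p \<and> p<1 \<and> h n p = m"
proof -
  have l1: "filterlim (\<lambda>p::real. ln(1-p)/ln(1-p powr n)) at_top (at_right 0)"
    using n by real_asymp
  have l2: "((\<lambda>p::real. ln(1-p)/ln(1-p powr n)) \<longlongrightarrow> 1) (at_left 1)"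
    using n by real_asymp
  have "eventually (\<lambda>p. m+1 \<le> h n p) (at_right 0)"
    using l1 unfolding filterlim_at_top h_def by blast
  moreover have "eventually (\<lambda>p. p \<in> {0<..<1/2}) (at_right (0::real))"
    by (rule eventually_at_right_real) simp
  ultimately have "eventually (\<lambda>p. m+1 \<le> h n p \<and> p \<in> {0<..<1/2}) (at_right (0::real))"
    by (rule eventually_conj)
  then obtain p1 where p1: "m+1 \<le> h n p1" "p1 \<in> {0<..<1/2}"
    using eventually_frequently[OF trivial_limit_at_right_real] frequently_ex by blast
  have "eventually (\<lambda>p. h n p < m) (at_left 1)"
    using order_tendstoD(2)[OF l2 m] unfolding h_def by blast
  moreover have "eventually (\<lambda>p. p \<in> {1/2<..<1}) (at_left (1::real))"
    by (rule eventually_at_left_real) simp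
  ultimately have "eventually (\<lambda>p. h n p < m \<and> p \<in> {1/2<..<1}) (at_left (1::real))"
    by (rule eventually_conj)
  then obtain p2 where p2: "h n p2 < m" "p2 \<in> {1/2<..<1}"
    using eventually_frequently[OF trivial_limit_at_left_real] frequently_ex by blast
  have "continuous_on {p1..p2} (h n)"
    using p1 p2 n by (intro continuous_at_imp_continuous_on ballI h_cont) auto
  then obtain x where "p1 \<le> x" "x \<le> p2" "h n x = m"
    using IVT2'[of "h n" p2 m p1] p1 p2 by auto
  then show ?thesis using p1 p2 by (intro exI[of _ x]) auto
qed

lemma pc_char: fixes p n :: real assumes "0<p" "p<1" "n>1" shows "pc (h n p) n = p"
  unfolding pc_def
proof (rule the_equality)
  show "0 < p \<and> p < 1 \<and> fmn (h n p) n p = p" using assms fmn_iff_h by auto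
next
  fix q assume "0 < q \<and> q < 1 \<and> fmn (h n p) n q = q"
  then have "h n q = h n p" using assms fmn_iff_h[of q n "h n p"] by auto
  then show "q = p" using assms h_inj[of q p n] \<open>0 < q \<and> q < 1 \<and> _\<close> by auto
qed

lemma pc_props: fixes m n :: real assumes "n>1" "m>1"
  shows "0 < pc m n \<and> pc m n < 1 \<and> h n (pc m n) = m"
  using h_exists[OF assms] pc_char assms by force

definition k :: "real \<Rightarrow> real \<Rightarrow> real" where
  "k m p = ln (1 - (1-p) powr (1/m)) / ln p"

lemma k_facts: fixes m p :: real assumes p: "0<p" "p<1" and m: "m>1"
  shows "k m p > 1" "h (k m p) p = m"
proof -
  define c where "c = 1 - (1-p) powr (1/m)"
  have "(1-p) powr 1 < (1-p) powr (1/m)" using p m by (intro powr_less_mono') auto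
  then have cp: "c < p" by (simp add: c_def)
  have "(1-p) powr (1/m) < (1-p) powr 0" using p m by (intro powr_less_mono') auto
  then have c0: "0 < c" using p by (simp add: c_def)
  have lp: "ln p < 0" using p by simp
  have "ln c < ln p" using c0 cp by simp
  then show "k m p > 1" using lp by (simp add: k_def c_def[symmetric] field_simps)
  have e1: "p powr (k m p) = exp (k m p * ln p)" using p by (simp add: powr_def)
  have e2: "k m p * ln p = ln c" using lp by (simp add: k_def c_def)
  have pk: "p powr (k m p) = c" using e1 e2 c0 by simp
  have "h (k m p) p = ln (1-p) / ln ((1-p) powr (1/m))" by (simp add: h_def pk c_def)
  also have "\<dots> = m" using p m by (simp add: ln_powr)
  finally show "h (k m p) p = m" .
qed

lemma k_of_h: fixes m n p :: real assumes p: "0<p" "p<1" and n: "n>0" and m: "m>0"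
  and hm: "h n p = m" shows "k m p = n"
proof -
  have a1: "p powr n < 1" using powr_less_mono'[of p 0 n] p n by simp
  have a0: "0 < p powr n" using p by simp
  have B: "ln (1 - p powr n) < 0" using a1 a0 by simp
  have eq: "ln (1-p) = m * ln (1 - p powr n)" using hm B by (auto simp: h_def field_simps)
  have "(1-p) powr (1/m) = exp (ln (1 - p powr n))"
    using p m by (simp add: powr_def eq)
  also have "\<dots> = 1 - p powr n" using a1 by simp
  finally have "1 - (1-p) powr (1/m) = p powr n" by simp
  then show ?thesis using p by (simp add: k_def ln_powr)
qed


lemma k_deriv: fixes m p :: real assumes p: "0<p" "p<1" and m: "m>1"
  shows "\<exists>D. (k m has_real_derivative D) (at p) \<and> D > 0"
proof -
  define n where "n = k m p"
  have n1: "n > 1" and hn: "h n p = m" using k_facts[OF p m] by (auto simp: n_def)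
  define a where "a = p powr n"
  have a0: "0 < a" using p by (simp add: a_def)
  have a1: "a < 1" using powr_less_mono'[of p 0 n] p n1 by (simp add: a_def)
  have B: "ln (1 - a) < 0" using a1 a0 by simp
  have eq: "m * ln (1 - p powr n) = ln (1-p)" using hn B by (auto simp: h_def a_def field_simps)
  have "(1-p) powr (1/m) = exp (ln (1 - a))"
    using p m by (simp add: powr_def eq[symmetric] a_def)
  also have "\<dots> = 1 - a" using a1 by simp
  finally have ca: "(1-p) powr (1/m) = 1 - a" .
  define c where "c = 1 - (1-p) powr (1/m)"
  have c: "c = a" by (simp add: c_def ca)
  define C' where "C' = (1/m) * (1-p) powr (1/m - 1) / c"
  define L where "L = ln p"
  have L0: "L < 0" using p by (simp add: L_def)
  have "(k m has_real_derivative (C' * L - ln c * (1/p)) / (L*L)) (at p)"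
    unfolding k_def[abs_def] using p a0 a1 c L0
    by (auto intro!: derivative_eq_intros simp: C'_def L_def c_def field_simps)
  moreover have "(C' * L - ln c * (1/p)) / (L*L) > 0"
  proof -
    have lc: "ln c = n * L" using p by (simp add: c a_def L_def ln_powr)
    have pw1: "(1-p) powr (1/m - 1) = (1-a)/(1-p)" using p by (simp add: powr_diff ca)
    have C'e: "C' = (1-a) / (m * (1-p) * a)" unfolding C'_def pw1 c using m p a0 by (simp add: field_simps)
    have kk: "1 - a < m * n * p powr (n-1) * (1-p)" using key[OF p n1 eq] by (simp add: a_def)
    have pw: "p powr (n-1) = a / p" using p by (simp add: a_def powr_diff)
    have "(1-a) * p < m * n * a * (1-p)"
      using kk p by (simp add: pw field_simps)
    then have "C' < n / p" using p m a0 a1 by (simp add: C'e field_simps)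
    then have "C' - n/p < 0" by simp
    then have "L * (C' - n/p) > 0" using L0 by (simp add: mult_neg_neg)
    moreover have "C' * L - ln c * (1/p) = L * (C' - n/p)" by (simp add: lc algebra_simps)
    ultimately have "C' * L - ln c * (1/p) > 0" by simp
    then show ?thesis using L0 by (intro divide_pos_pos) (auto simp: mult_neg_neg)
  qed
  ultimately show ?thesis by blast
qed

lemma k_cont: fixes p m :: real assumes "0<p" "p<1" "m>1" shows "isCont (k m) p"
  using k_deriv[OF assms] DERIV_isCont by blast

theorem proposition3p4:
  fixes m n :: real
  assumes "m \<ge> 2" and "n \<ge> 2"
  shows "(\<exists>D. ((\<lambda>x. pc x n) has_real_derivative D) (at m within {2..}) \<and> D < 0)
       \<and> (\<exists>D. ((\<lambda>y. pc m y) has_real_derivative D) (at n within {2..}) \<and> D > 0)"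
proof
  have m1: "m > 1" and n1: "n > 1" using assms by auto
  define x0 where "x0 = pc m n"
  have x0: "0 < x0" "x0 < 1" "h n x0 = m" using pc_props[OF n1 m1] by (auto simp: x0_def)
  define d where "d = min (x0/2) ((1-x0)/2)"
  have d: "0 < d" using x0 by (simp add: d_def)
  have dz: "0 < z \<and> z < 1" if "\<bar>z - x0\<bar> \<le> d" for z
  proof -
    have A: "\<bar>z - x0\<bar> \<le> x0/2" and B: "\<bar>z - x0\<bar> \<le> (1-x0)/2" using that by (auto simp: d_def)
    show ?thesis using abs_le_D1[OF A] abs_le_D2[OF A] abs_le_D1[OF B] x0(1,2) by (auto simp: field_simps)
  qed
  show "\<exists>D. ((\<lambda>x. pc x n) has_real_derivative D) (at m within {2..}) \<and> D < 0"
  proof -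
    obtain D where D: "(h n has_real_derivative D) (at x0)" "D < 0" using h_deriv[OF x0(1,2) n1] by blast
    have cont: "isCont (\<lambda>x. pc x n) (h n x0)"
      by (rule isCont_inverse_function[OF d]) (use dz pc_char h_cont n1 in auto)
    have "((\<lambda>x. pc x n) has_real_derivative inverse D) (at m)"
    proof (rule DERIV_inverse_function[where a=1 and b="m+1"])
      show "(h n has_real_derivative D) (at (pc m n))" using D by (simp add: x0_def)
      show "isCont (\<lambda>x. pc x n) m" using cont x0 by simp
    qed (use D m1 pc_props n1 in auto)
    then show ?thesis using D by (intro exI[of _ "inverse D"]) (auto intro: has_field_derivative_at_within)
  qed
  show "\<exists>D. ((\<lambda>y. pc m y) has_real_derivative D) (at n within {2..}) \<and> D > 0"
  proof -
    obtain D where D: "(k m has_real_derivative D) (at x0)" "D > 0" using k_deriv[OF x0(1,2) m1] by blast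
    have kx0: "k m x0 = n" using k_of_h[OF x0(1,2) _ _ x0(3)] m1 n1 by simp
    have inv: "pc m (k m z) = z" if "0 < z" "z < 1" for z
      using pc_char[OF that k_facts(1)[OF that m1]] k_facts(2)[OF that m1] by simp
    have cont: "isCont (\<lambda>y. pc m y) (k m x0)"
      by (rule isCont_inverse_function[OF d]) (use dz inv k_cont m1 in auto)
    have "((\<lambda>y. pc m y) has_real_derivative inverse D) (at n)"
    proof (rule DERIV_inverse_function[where a=1 and b="n+1"])
      show "(k m has_real_derivative D) (at (pc m n))" using D by (simp add: x0_def)
      show "isCont (\<lambda>y. pc m y) n" using cont kx0 by simp
      fix y assume "1 < y" "y < n + 1"
      then show "k m (pc m y) = y" using pc_props[of y m] m1 k_of_h[of "pc m y" y m] by auto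
    qed (use D n1 in auto)
    then show ?thesis using D by (intro exI[of _ "inverse D"]) (auto intro: has_field_derivative_at_within)
  qed
qed

end
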